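(* Let $d\ge1$. As a function of $B\in(1,\infty)$, $\lambda_d(B)$ is continuous and decreasing, and $$\lim_{B\to1}\lambda_d(B)=1,\qquad \lim_{B\to\infty}\lambda_d(B)=\frac12.$$ In particular $\lambda_d(B)\ge\frac12$ for all $B>1$.
   Context: Gauss map $T(x)=1/x-\lfloor1/x\rfloor$ ($T(0)=0$). Pressure: $\mathsf P(T,\phi)=\lim_{n\to\infty}\frac1n\log\sum_{(a_1,\dots,a_n)\in\mathbb N^n}\sup_{x\in[0,1)}e^{S_n\phi([a_1,\dots,a_n+x])}$, $S_n\phi=\sum_{i=0}^{n-1}\phi\circ T^i$, where $[a_1,\dots,a_n+x]$ is the finite continued fraction with last entry $a_n+x$. Functions $g_1(s)=s$, $g_n(s)=\frac{s g_{n-1}(s)}{1-s+ng_{n-1}(s)}$ ($n\ge2$). For $B>1$, $\lambda_d(B)=\inf\{s\ge0:\mathsf P(T,-s\log|T'(x)|-g_d(s)\log B)\le0\}$. *)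

theory Defs
  imports "HOL-Analysis.Analysis"
begin

definition gauss_map :: "real \<Rightarrow> real" where
  "gauss_map x = (if x = 0 then 0 else 1 / x - of_int \<lfloor>1 / x\<rfloor>)"

definition abs_gauss_deriv :: "real \<Rightarrow> real" where
  "abs_gauss_deriv x = 1 / x\<^sup>2"

text \<open>Finite continued fraction: cf [a1,...,an] x = [a1,...,an + x];
  cf [] x = x, cf (a # as) x = 1 / (a + cf as x).\<close>
fun cf :: "nat list \<Rightarrow> real \<Rightarrow> real" where
  "cf [] x = x"
| "cf (a # as) x = 1 / (real a + cf as x)"

text \<open>Birkhoff sum S_n phi at the point [a1,...,an + x]:
  sum over i < n of phi(T^i [a1,...,an+x]) = phi([a_{i+1},...,a_n + x]).\<close>
definition birkhoff_cf :: "(real \<Rightarrow> real) \<Rightarrow> nat list \<Rightarrow> real \<Rightarrow> real" where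
  "birkhoff_cf phi as x = (\<Sum>i<length as. phi (cf (drop i as) x))"

definition words :: "nat \<Rightarrow> nat list set" where
  "words n = {as. length as = n \<and> (\<forall>a\<in>set as. 1 \<le> a)}"

definition partition_sum :: "(real \<Rightarrow> real) \<Rightarrow> nat \<Rightarrow> ennreal" where
  "partition_sum phi n =
     (\<integral>\<^sup>+ as. (SUP x\<in>{0..<1::real}. ennreal (exp (birkhoff_cf phi as x))) \<partial>count_space (words n))"

definition ln_ennreal :: "ennreal \<Rightarrow> ereal" where
  "ln_ennreal z = (if z = \<infinity> then \<infinity> else if z = 0 then -\<infinity> else ereal (ln (enn2real z)))"

definition pressure :: "(real \<Rightarrow> real) \<Rightarrow> ereal" where
  "pressure phi = lim (\<lambda>n. ereal (1 / real n) * ln_ennreal (partition_sum phi n))"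

text \<open>g_1(s) = s, g_n(s) = s g_{n-1}(s) / (1 - s + n g_{n-1}(s)) for n >= 2 (g_0 unused).\<close>
fun g :: "nat \<Rightarrow> real \<Rightarrow> real" where
  "g 0 s = s"
| "g (Suc 0) s = s"
| "g (Suc (Suc n)) s =
     s * g (Suc n) s / (1 - s + real (Suc (Suc n)) * g (Suc n) s)"

definition lambda_d :: "nat \<Rightarrow> real \<Rightarrow> real" where
  "lambda_d d B = Inf {s. 0 \<le> s \<and>
      pressure (\<lambda>x. - s * ln (abs_gauss_deriv x) - g d s * ln B) \<le> 0}"

end

theory Submission
  imports Defs
begin


fun Qc :: "nat list \<Rightarrow> nat" and Pc :: "nat list \<Rightarrow> nat" where
  "Qc [] = 1"
| "Qc (a # as) = a * Qc as + Pc as"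
| "Pc [] = 0"
| "Pc (a # as) = Qc as"

fun Qd :: "nat list \<Rightarrow> nat" and Pd :: "nat list \<Rightarrow> nat" where
  "Qd [] = 0"
| "Qd (a # as) = a * Qd as + Pd as"
| "Pd [] = 1"
| "Pd (a # as) = Qd as"

definition posl :: "nat list \<Rightarrow> bool" where
  "posl as \<longleftrightarrow> (\<forall>a\<in>set as. 1 \<le> a)"

lemma posl_simps[simp]: "posl []" "posl (a # as) \<longleftrightarrow> 1 \<le> a \<and> posl as"
  "posl (u @ v) \<longleftrightarrow> posl u \<and> posl v"
  by (auto simp: posl_def)

lemma Pc_le_Qc: "posl as \<Longrightarrow> Pc as \<le> Qc as"
  by (induction as) (auto simp: trans_le_add1)

lemma Qc_pos: "posl as \<Longrightarrow> 1 \<le> Qc as"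
proof (induction as)
  case (Cons a as)
  then have "Qc as \<le> a * Qc as" by simp
  then show ?case using Cons by (simp add: trans_le_add1)
qed simp

lemma Qd_le_Qc: "posl as \<Longrightarrow> as \<noteq> [] \<Longrightarrow> Qd as \<le> Qc as \<and> Pd as \<le> Pc as"
proof (induction as)
  case (Cons a as)
  show ?case
  proof (cases "as = []")
    case True then show ?thesis using Cons by simp
  next
    case False
    with Cons have "Qd as \<le> Qc as" "Pd as \<le> Pc as" by auto
    then show ?thesis by (simp add: add_mono)
  qed
qed simp

lemma Qd_le_Qc': "posl as \<Longrightarrow> Qd as \<le> Qc as"
  by (cases "as = []") (auto dest: Qd_le_Qc)

lemma append_QP: "Qc (u @ v) = Qc u * Qc v + Qd u * Pc v \<and> Pc (u @ v) = Pc u * Qc v + Pd u * Pc v"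
  by (induction u) (auto simp: algebra_simps)

lemma Qc_append_ge: "Qc u * Qc v \<le> Qc (u @ v)"
  using append_QP by simp

lemma Qc_append_le: "posl u \<Longrightarrow> posl v \<Longrightarrow> Qc (u @ v) \<le> 2 * Qc u * Qc v"
proof -
  assume "posl u" "posl v"
  then have "Qd u \<le> Qc u" "Pc v \<le> Qc v" using Qd_le_Qc' Pc_le_Qc by auto
  then have "Qd u * Pc v \<le> Qc u * Qc v" by (simp add: mult_le_mono)
  then show ?thesis using append_QP[of u v] by simp
qed

lemma Qc_two: "posl (a # b # w) \<Longrightarrow> 2 * Qc w \<le> Qc (a # b # w)"
proof -
  assume h: "posl (a # b # w)"
  then have "Qc w \<le> b * Qc w + Pc w" by (simp add: trans_le_add1)
  also have "\<dots> \<le> a * (b * Qc w + Pc w)" using h by simp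
  finally have "Qc w \<le> a * (b * Qc w + Pc w)" .
  then show ?thesis by simp
qed

lemma Qc_growth: "posl w \<Longrightarrow> 2 ^ (length w div 2) \<le> Qc w"
proof (induction w rule: induct_list012)
  case 1 then show ?case by simp
next
  case (2 x) then show ?case using Qc_pos[of "[x]"] by simp
next
  case (3 x y zs)
  then have "2 ^ (length zs div 2) \<le> Qc zs" by simp
  then have "2 * 2 ^ (length zs div 2) \<le> Qc (x # y # zs)" using Qc_two[OF "3.prems"] by linarith
  then show ?case by simp
qed

lemma cf_formula: "posl as \<Longrightarrow> 0 \<le> (x::real) \<Longrightarrow>
   cf as x = (real (Pc as) + x * real (Pd as)) / (real (Qc as) + x * real (Qd as))"
proof (induction as)
  case (Cons a as)
  define N where "N = real (Pc as) + x * real (Pd as)"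
  define D where "D = real (Qc as) + x * real (Qd as)"
  have ih: "cf as x = N / D" using Cons by (simp add: N_def D_def)
  have q: "D > 0" using Qc_pos[of as] Cons.prems unfolding D_def by (simp add: add_pos_nonneg)
  have n: "N \<ge> 0" using Cons.prems unfolding N_def by simp
  have a: "real a \<ge> 1" using Cons.prems by simp
  have "real a + cf as x = (real a * D + N) / D"
    using q ih by (simp add: field_simps)
  moreover have "real a * D + N > 0" using a q n by (smt (verit) mult_pos_pos)
  ultimately have "cf (a # as) x = D / (real a * D + N)" using q by simp
  then show ?case unfolding N_def D_def by (simp add: algebra_simps)
qed simp

lemma denom_pos: "posl as \<Longrightarrow> 0 \<le> (x::real) \<Longrightarrow> real (Qc as) + x * real (Qd as) > 0"
  using Qc_pos[of as] by (simp add: add_pos_nonneg)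

lemma cf_nonneg: "posl as \<Longrightarrow> 0 \<le> (x::real) \<Longrightarrow> 0 \<le> cf as x"
  by (simp add: cf_formula denom_pos)

lemma cf_pos: "posl as \<Longrightarrow> as \<noteq> [] \<Longrightarrow> 0 \<le> (x::real) \<Longrightarrow> 0 < cf as x"
  by (cases as) (auto intro!: add_pos_nonneg cf_nonneg)

lemma prod_cf: "posl as \<Longrightarrow> 0 \<le> (x::real) \<Longrightarrow>
   (\<Prod>i<length as. cf (drop i as) x) = 1 / (real (Qc as) + x * real (Qd as))"
proof (induction as)
  case (Cons a as)
  have "(\<Prod>i<length (a # as). cf (drop i (a # as)) x) = cf (a # as) x * (\<Prod>i<length as. cf (drop i as) x)"
    by (simp only: length_Cons prod.lessThan_Suc_shift) simp
  also have "\<dots> = cf (a # as) x / (real (Qc as) + x * real (Qd as))" using Cons by simp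
  also have "\<dots> = 1 / (real (Qc (a # as)) + x * real (Qd (a # as)))"
    using cf_formula[OF Cons.prems(1,2)] denom_pos[OF Cons.prems(1,2)] denom_pos[of as x] Cons.prems
      cf_nonneg[of as x]
    by (simp add: field_simps)
  finally show ?case .
qed simp

lemma words_posl: "words n = {as. length as = n \<and> posl as}"
  by (auto simp: words_def posl_def)

lemma countable_words: "countable (words n)"
  by (rule countableI_type)

lemma words_0: "words 0 = {[]}"
  by (auto simp: words_def)

lemma bij_append_words:
  "bij_betw (\<lambda>(u, v). u @ v) (words n \<times> words m) (words (n + m))"
proof (rule bij_betwI')
  fix x y assume "x \<in> words n \<times> words m" "y \<in> words n \<times> words m"
  then show "((case x of (u, v) \<Rightarrow> u @ v) = (case y of (u, v) \<Rightarrow> u @ v)) = (x = y)"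
    by (cases x; cases y) (auto simp: words_def append_eq_append_conv)
next
  fix x assume "x \<in> words n \<times> words m"
  then show "(case x of (u, v) \<Rightarrow> u @ v) \<in> words (n + m)"
    by (cases x) (auto simp: words_def)
next
  fix y assume y: "y \<in> words (n + m)"
  then have "(take n y, drop n y) \<in> words n \<times> words m" "y = (case (take n y, drop n y) of (u, v) \<Rightarrow> u @ v)"
    by (auto simp: words_def dest: in_set_takeD in_set_dropD)
  then show "\<exists>x\<in>words n \<times> words m. y = (case x of (u, v) \<Rightarrow> u @ v)" by blast
qed

lemma split_words:
  "(\<integral>\<^sup>+w. f w \<partial>count_space (words (n + m))) =
   (\<integral>\<^sup>+u. \<integral>\<^sup>+v. f (u @ v) \<partial>count_space (words m) \<partial>count_space (words n))"
proof -
  have "(\<integral>\<^sup>+w. f w \<partial>count_space (words (n + m))) =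
        (\<integral>\<^sup>+p. f ((\<lambda>(u, v). u @ v) p) \<partial>count_space (words n \<times> words m))"
    by (rule nn_integral_bij_count_space[OF bij_append_words, symmetric])
  also have "\<dots> = (\<integral>\<^sup>+p. f ((\<lambda>(u, v). u @ v) p) \<partial>(count_space (words n) \<Otimes>\<^sub>M count_space (words m)))"
    by (simp add: pair_measure_countable countable_words)
  also have "\<dots> = (\<integral>\<^sup>+u. \<integral>\<^sup>+v. f (u @ v) \<partial>count_space (words m) \<partial>count_space (words n))"
    by (subst sigma_finite_measure.nn_integral_fst[symmetric])
       (simp_all add: sigma_finite_measure_count_space_countable pair_measure_countable countable_words)
  finally show ?thesis .
qed

lemma split_words':
  "(\<integral>\<^sup>+w. f w \<partial>count_space (words (n + m))) =
   (\<integral>\<^sup>+v. \<integral>\<^sup>+u. f (u @ v) \<partial>count_space (words n) \<partial>count_space (words m))"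
  unfolding split_words
  by (rule nn_integral_count_space_nn_integral) (simp_all add: countable_words)

definition W :: "nat \<Rightarrow> real \<Rightarrow> ennreal" where
  "W n s = (\<integral>\<^sup>+w. ennreal (real (Qc w) powr (-2 * s)) \<partial>count_space (words n))"

lemma birkhoff_formula:
  fixes x :: real
  assumes w: "posl w" and x: "0 \<le> x"
  shows "birkhoff_cf (\<lambda>y. - s * ln (abs_gauss_deriv y) - c) w x =
         -2 * s * ln (real (Qc w) + x * real (Qd w)) - real (length w) * c"
proof -
  have pos: "0 < cf (drop i w) x" if "i < length w" for i
    using w that x by (intro cf_pos) (auto simp: posl_def dest: in_set_dropD)
  have "birkhoff_cf (\<lambda>y. - s * ln (abs_gauss_deriv y) - c) w x =
        (\<Sum>i<length w. 2 * s * ln (cf (drop i w) x) - c)"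
    unfolding birkhoff_cf_def abs_gauss_deriv_def
    by (intro sum.cong refl) (simp add: pos ln_div ln_realpow)
  also have "\<dots> = 2 * s * (\<Sum>i<length w. ln (cf (drop i w) x)) - real (length w) * c"
    by (simp add: sum_subtractf sum_distrib_left)
  also have "(\<Sum>i<length w. ln (cf (drop i w) x)) = ln (\<Prod>i<length w. cf (drop i w) x)"
    by (subst ln_prod) (auto dest: pos)
  also have "\<dots> = - ln (real (Qc w) + x * real (Qd w))"
    using prod_cf[OF w x] denom_pos[OF w x] by (simp add: ln_div)
  finally show ?thesis by simp
qed

lemma sup_formula:
  assumes w: "posl w" and s: "0 \<le> s"
  shows "(SUP x\<in>{0..<1::real}. ennreal (exp (birkhoff_cf (\<lambda>y. - s * ln (abs_gauss_deriv y) - c) w x)))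
       = ennreal (real (Qc w) powr (-2 * s) * exp (- real (length w) * c))"
proof -
  have e: "exp (birkhoff_cf (\<lambda>y. - s * ln (abs_gauss_deriv y) - c) w x) =
     (real (Qc w) + x * real (Qd w)) powr (-2 * s) * exp (- real (length w) * c)" if x: "0 \<le> x" for x :: real
    using denom_pos[OF w x] unfolding birkhoff_formula[OF w x]
    by (simp add: powr_def exp_diff exp_minus field_simps)
  show ?thesis
  proof (rule antisym)
    show "(SUP x\<in>{0..<1::real}. ennreal (exp (birkhoff_cf (\<lambda>y. - s * ln (abs_gauss_deriv y) - c) w x)))
       \<le> ennreal (real (Qc w) powr (-2 * s) * exp (- real (length w) * c))"
    proof (rule SUP_least)
      fix x :: real assume "x \<in> {0..<1}"
      then have x: "0 \<le> x" by simp
      have "(real (Qc w) + x * real (Qd w)) powr (-2 * s) \<le> real (Qc w) powr (-2 * s)"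
        using s x Qc_pos[OF w] by (intro powr_mono2') auto
      then show "ennreal (exp (birkhoff_cf (\<lambda>y. - s * ln (abs_gauss_deriv y) - c) w x))
          \<le> ennreal (real (Qc w) powr (-2 * s) * exp (- real (length w) * c))"
        unfolding e[OF x] by (intro ennreal_leI mult_right_mono) auto
    qed
    show "ennreal (real (Qc w) powr (-2 * s) * exp (- real (length w) * c)) \<le>
      (SUP x\<in>{0..<1::real}. ennreal (exp (birkhoff_cf (\<lambda>y. - s * ln (abs_gauss_deriv y) - c) w x)))"
    proof (rule SUP_upper2[of 0])
      show "ennreal (real (Qc w) powr (-2 * s) * exp (- real (length w) * c)) \<le>
        ennreal (exp (birkhoff_cf (\<lambda>y. - s * ln (abs_gauss_deriv y) - c) w 0))"
        unfolding e[OF order_refl] by simp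
    qed simp
  qed
qed

lemma partition_formula:
  assumes s: "0 \<le> s"
  shows "partition_sum (\<lambda>y. - s * ln (abs_gauss_deriv y) - c) n = ennreal (exp (- real n * c)) * W n s"
proof -
  have "partition_sum (\<lambda>y. - s * ln (abs_gauss_deriv y) - c) n =
     (\<integral>\<^sup>+w. ennreal (real (Qc w) powr (-2 * s)) * ennreal (exp (- real n * c)) \<partial>count_space (words n))"
    unfolding partition_sum_def
    apply (intro nn_integral_cong)
    apply (subst sup_formula)
    apply (auto simp: s words_posl ennreal_mult)
    done
  also have "\<dots> = W n s * ennreal (exp (- real n * c))"
    unfolding W_def by (rule nn_integral_multc) simp
  finally show ?thesis by (simp add: mult.commute)
qed



lemma W_0: "W 0 s = 1"
  by (simp add: W_def words_0 nn_integral_count_space_finite)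

lemma bij_words_1: "bij_betw (\<lambda>i. [Suc i]) UNIV (words 1)"
proof (rule bij_betwI')
  fix y assume "y \<in> words 1"
  then obtain a where "y = [a]" "1 \<le> a" by (auto simp: words_def length_Suc_conv)
  then show "\<exists>x\<in>UNIV. y = [Suc x]" by (intro bexI[of _ "a - 1"]) auto
qed (auto simp: words_def)

lemma W_1: "W 1 s = (\<Sum>i. ennreal (real (Suc i) powr (-2 * s)))"
proof -
  have "W 1 s = (\<integral>\<^sup>+i. ennreal (real (Qc [Suc i]) powr (-2 * s)) \<partial>count_space UNIV)"
    unfolding W_def by (rule nn_integral_bij_count_space[OF bij_words_1, symmetric])
  also have "\<dots> = (\<Sum>i. ennreal (real (Suc i) powr (-2 * s)))"
    by (simp add: nn_integral_count_space_nat del: of_nat_Suc)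
  finally show ?thesis .
qed

lemma nn_integral_count_space_ge_point:
  assumes "x \<in> A"
  shows "f x \<le> (\<integral>\<^sup>+y. f y \<partial>count_space A)"
proof -
  have "(\<integral>\<^sup>+y. f x * indicator {x} y \<partial>count_space A) = f x * emeasure (count_space A) {x}"
    using assms by (intro nn_integral_cmult_indicator) auto
  also have "emeasure (count_space A) {x} = 1"
    using assms by (subst emeasure_count_space_finite) auto
  finally have "f x = (\<integral>\<^sup>+y. f x * indicator {x} y \<partial>count_space A)" by simp
  also have "\<dots> \<le> (\<integral>\<^sup>+y. f y \<partial>count_space A)"
    by (intro nn_integral_mono) (auto split: split_indicator)
  finally show ?thesis .
qed

lemma W_pos: "0 < W n s"
proof -
  have r: "replicate n 1 \<in> words n" by (auto simp: words_def)
  have "0 < ennreal (real (Qc (replicate n 1)) powr (-2 * s))"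
    using Qc_pos[of "replicate n 1"] by (simp add: posl_def)
  also have "\<dots> \<le> W n s" unfolding W_def by (rule nn_integral_count_space_ge_point[OF r])
  finally show ?thesis .
qed

lemma W_prod:
  "(\<integral>\<^sup>+u. \<integral>\<^sup>+v. ennreal (real (Qc u) powr (-2 * s)) * ennreal (real (Qc v) powr (-2 * s))
      \<partial>count_space (words m) \<partial>count_space (words n)) = W n s * W m s"
  unfolding W_def
  by (simp add: nn_integral_cmult nn_integral_multc)

lemma W_mult_le:
  assumes s: "0 \<le> s"
  shows "W (n + m) s \<le> W n s * W m s"
proof -
  have "W (n + m) s = (\<integral>\<^sup>+u. \<integral>\<^sup>+v. ennreal (real (Qc (u @ v)) powr (-2 * s))
      \<partial>count_space (words m) \<partial>count_space (words n))"
    unfolding W_def by (rule split_words)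
  also have "\<dots> \<le> (\<integral>\<^sup>+u. \<integral>\<^sup>+v. ennreal (real (Qc u) powr (-2 * s)) * ennreal (real (Qc v) powr (-2 * s))
      \<partial>count_space (words m) \<partial>count_space (words n))"
  proof (intro nn_integral_mono)
    fix u v assume "u \<in> space (count_space (words n))" "v \<in> space (count_space (words m))"
    then have u: "posl u" and v: "posl v" by (auto simp: words_posl)
    have "real (Qc (u @ v)) powr (-2 * s) \<le> (real (Qc u) * real (Qc v)) powr (-2 * s)"
      using Qc_append_ge[of u v] Qc_pos[OF u] Qc_pos[OF v] s
      by (intro powr_mono2') (auto simp flip: of_nat_mult)
    also have "\<dots> = real (Qc u) powr (-2 * s) * real (Qc v) powr (-2 * s)"
      by (simp add: powr_mult)
    finally show "ennreal (real (Qc (u @ v)) powr (-2 * s)) \<le>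
        ennreal (real (Qc u) powr (-2 * s)) * ennreal (real (Qc v) powr (-2 * s))"
      by (simp add: ennreal_mult[symmetric] ennreal_leI)
  qed
  also have "\<dots> = W n s * W m s" by (rule W_prod)
  finally show ?thesis .
qed

lemma W_mult_ge:
  assumes s: "0 \<le> s"
  shows "ennreal (2 powr (-2 * s)) * (W n s * W m s) \<le> W (n + m) s"
proof -
  have "ennreal (2 powr (-2 * s)) * (W n s * W m s) =
      (\<integral>\<^sup>+u. \<integral>\<^sup>+v. ennreal (2 powr (-2 * s)) * (ennreal (real (Qc u) powr (-2 * s)) * ennreal (real (Qc v) powr (-2 * s)))
      \<partial>count_space (words m) \<partial>count_space (words n))"
    unfolding W_prod[symmetric] by (simp add: nn_integral_cmult)
  also have "\<dots> \<le> (\<integral>\<^sup>+u. \<integral>\<^sup>+v. ennreal (real (Qc (u @ v)) powr (-2 * s))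
      \<partial>count_space (words m) \<partial>count_space (words n))"
  proof (intro nn_integral_mono)
    fix u v assume "u \<in> space (count_space (words n))" "v \<in> space (count_space (words m))"
    then have u: "posl u" and v: "posl v" by (auto simp: words_posl)
    have "2 powr (-2 * s) * (real (Qc u) powr (-2 * s) * real (Qc v) powr (-2 * s)) =
          (2 * real (Qc u) * real (Qc v)) powr (-2 * s)"
      by (simp add: powr_mult)
    also have "\<dots> \<le> real (Qc (u @ v)) powr (-2 * s)"
    proof (intro powr_mono2')
      have "real (Qc (u @ v)) \<le> real (2 * Qc u * Qc v)" using Qc_append_le[OF u v] by (simp only: of_nat_le_iff)
      then show "real (Qc (u @ v)) \<le> 2 * real (Qc u) * real (Qc v)" by simp
      show "0 < real (Qc (u @ v))" using Qc_pos[of "u @ v"] u v by simp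
    qed (use s in auto)
    finally show "ennreal (2 powr (-2 * s)) * (ennreal (real (Qc u) powr (-2 * s)) * ennreal (real (Qc v) powr (-2 * s)))
        \<le> ennreal (real (Qc (u @ v)) powr (-2 * s))"
      by (simp add: ennreal_mult[symmetric] ennreal_leI)
  qed
  also have "\<dots> = W (n + m) s"
    unfolding W_def by (rule split_words[symmetric])
  finally show ?thesis .
qed

lemma summable_powr_Suc: "1 / 2 < s \<Longrightarrow> summable (\<lambda>i. real (Suc i) powr (-2 * s))"
  using summable_Suc_iff[of "\<lambda>n. real n powr (-2 * s)"] summable_real_powr_iff[of "-2 * s"]
  by simp

lemma W_1_finite: "1 / 2 < s \<Longrightarrow> W 1 s < top"
  unfolding W_1 using summable_powr_Suc[of s]
  by (subst suminf_ennreal2) auto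

lemma W_finite: "1 / 2 < s \<Longrightarrow> W n s < top"
proof (induction n)
  case 0 then show ?case by (simp add: W_0)
next
  case (Suc n)
  have "W (Suc n) s = W (1 + n) s" by simp
  also have "\<dots> \<le> W 1 s * W n s" using Suc.prems by (intro W_mult_le) auto
  also have "\<dots> < top" using W_1_finite[OF Suc.prems] Suc by (simp add: ennreal_mult_less_top)
  finally show ?case .
qed

lemma W_1_infinite: "0 \<le> s \<Longrightarrow> s \<le> 1 / 2 \<Longrightarrow> W 1 s = top"
proof -
  assume s: "0 \<le> s" "s \<le> 1 / 2"
  have ns0: "\<not> summable (\<lambda>n. inverse (real n))"
    by (rule not_summable_harmonic)
  have ns: "\<not> summable (\<lambda>i. inverse (real (Suc i)))"
    using ns0 by (subst summable_Suc_iff[of "\<lambda>n. inverse (real n)"])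
  have nn: "\<And>i. 0 \<le> inverse (real (Suc i))" by simp
  have "(\<Sum>i. ennreal (inverse (real (Suc i)))) = top"
  proof (rule ccontr)
    assume "(\<Sum>i. ennreal (inverse (real (Suc i)))) \<noteq> top"
    from summable_suminf_not_top[OF nn this] ns show False by blast
  qed
  then have "top = (\<integral>\<^sup>+i. ennreal (inverse (real (Suc i))) \<partial>count_space UNIV)"
    by (simp only: nn_integral_count_space_nat)
  also have "\<dots> \<le> (\<integral>\<^sup>+i. ennreal (real (Suc i) powr (-2 * s)) \<partial>count_space UNIV)"
  proof (intro nn_integral_mono ennreal_leI)
    fix i
    have "real (Suc i) powr (-1) \<le> real (Suc i) powr (-2 * s)"
      using s by (intro powr_mono) auto
    then show "inverse (real (Suc i)) \<le> real (Suc i) powr (-2 * s)"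
      by (simp add: powr_minus)
  qed
  also have "\<dots> = W 1 s" by (simp only: W_1 nn_integral_count_space_nat)
  finally show ?thesis by (simp add: top_unique)
qed

lemma W_infinite: "0 \<le> s \<Longrightarrow> s \<le> 1 / 2 \<Longrightarrow> 1 \<le> n \<Longrightarrow> W n s = top"
proof -
  assume s: "0 \<le> s" "s \<le> 1 / 2" and n: "1 \<le> n"
  then obtain m where m: "n = 1 + m" by (metis le_Suc_ex)
  have "ennreal (2 powr (-2 * s)) * (W 1 s * W m s) \<le> W n s"
    unfolding m using s by (intro W_mult_ge) auto
  moreover have "ennreal (2 powr (-2 * s)) * (W 1 s * W m s) = top"
    using W_1_infinite[OF s] W_pos[of m s] by (simp add: ennreal_mult_top ennreal_top_mult)
  ultimately show ?thesis by (simp add: top_unique)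
qed



definition wr :: "nat \<Rightarrow> real \<Rightarrow> real" where "wr n s = enn2real (W n s)"
definition aa :: "nat \<Rightarrow> real \<Rightarrow> real" where "aa n s = ln (wr n s)"
definition cc :: "real \<Rightarrow> real" where "cc s = 2 * s * ln 2"

lemma W_eq: "1 / 2 < s \<Longrightarrow> W n s = ennreal (wr n s)"
  unfolding wr_def using W_finite[of s n] by (simp add: less_top)

lemma wr_pos: "1 / 2 < s \<Longrightarrow> 0 < wr n s"
  using W_pos[of n s] W_eq[of s n] by simp

lemma aa_0: "aa 0 s = 0"
  by (simp add: aa_def wr_def W_0)

lemma aa_sub: assumes s: "1 / 2 < s" shows "aa (n + m) s \<le> aa n s + aa m s"
proof -
  have "ennreal (wr (n + m) s) \<le> ennreal (wr n s * wr m s)"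
    using W_mult_le[of s n m] s W_eq[OF s] wr_pos[OF s]
    by (simp add: ennreal_mult[symmetric] less_imp_le del: ennreal_le_iff)
  then have "wr (n + m) s \<le> wr n s * wr m s"
    using wr_pos[OF s, of n] wr_pos[OF s, of m] by (subst (asm) ennreal_le_iff) auto
  then have "ln (wr (n + m) s) \<le> ln (wr n s * wr m s)"
    using wr_pos[OF s, of n] wr_pos[OF s, of m] wr_pos[OF s, of "n+m"] by (subst ln_le_cancel_iff) auto
  then show ?thesis unfolding aa_def using wr_pos[OF s, of n] wr_pos[OF s, of m]
    by (simp add: ln_mult)
qed

lemma aa_sup: assumes s: "1 / 2 < s" shows "aa n s + aa m s - cc s \<le> aa (n + m) s"
proof -
  have "ennreal (2 powr (-2 * s) * (wr n s * wr m s)) \<le> ennreal (wr (n + m) s)"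
    using W_mult_ge[of s n m] s W_eq[OF s] wr_pos[OF s]
    by (simp add: ennreal_mult[symmetric] less_imp_le del: ennreal_le_iff)
  then have *: "2 powr (-2 * s) * (wr n s * wr m s) \<le> wr (n + m) s"
    using wr_pos[OF s, of "n + m"] by (subst (asm) ennreal_le_iff) auto
  have "ln (2 powr (-2 * s) * (wr n s * wr m s)) \<le> ln (wr (n + m) s)"
    using * wr_pos[OF s] by (subst ln_le_cancel_iff) auto
  moreover have "ln (2 powr (-2 * s) * (wr n s * wr m s)) = aa n s + aa m s - cc s"
    unfolding aa_def cc_def using wr_pos[OF s, of n] wr_pos[OF s, of m] by (simp add: ln_mult ln_powr)
  ultimately show ?thesis unfolding aa_def by simp
qed

lemma aa_mul_le: assumes s: "1 / 2 < s" shows "aa (k * m) s \<le> real k * aa m s"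
proof (induction k)
  case 0 then show ?case by (simp add: aa_0)
next
  case (Suc k)
  have "aa (Suc k * m) s = aa (m + k * m) s" by simp
  also have "\<dots> \<le> aa m s + aa (k * m) s" by (rule aa_sub[OF s])
  also have "\<dots> \<le> real (Suc k) * aa m s" using Suc by (simp add: algebra_simps)
  finally show ?case .
qed

lemma aa_mul_ge: assumes s: "1 / 2 < s" shows "real m * aa n s - real m * cc s \<le> aa (n * m) s"
proof (induction m)
  case 0 then show ?case by (simp add: aa_0)
next
  case (Suc m)
  have "real (Suc m) * aa n s - real (Suc m) * cc s \<le> aa n s + aa (n * m) s - cc s"
    using Suc by (simp add: algebra_simps)
  also have "\<dots> \<le> aa (n + n * m) s" by (rule aa_sup[OF s])
  finally show ?case by (simp add: mult.commute)
qed

lemma aa_key: assumes s: "1 / 2 < s" and n: "1 \<le> n" and m: "1 \<le> m"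
  shows "aa n s / n - cc s / n \<le> aa m s / m"
proof -
  have "real m * aa n s - real m * cc s \<le> real n * aa m s"
    using aa_mul_ge[OF s, of m n] aa_mul_le[OF s, of n m] by (simp add: mult.commute)
  then have "(aa n s - cc s) * real m \<le> aa m s * real n" by (simp add: algebra_simps)
  then have "(aa n s - cc s) / real n \<le> aa m s / real m"
    using n m by (simp add: divide_simps)
  then show ?thesis by (simp add: diff_divide_distrib)
qed

definition Pf :: "real \<Rightarrow> real" where "Pf s = (INF m\<in>{1..}. aa m s / real m)"

lemma Pf_le: assumes s: "1 / 2 < s" and n: "1 \<le> n" shows "Pf s \<le> aa n s / n"
  unfolding Pf_def
proof (rule cINF_lower)
  show "bdd_below ((\<lambda>m. aa m s / real m) ` {1..})"
    using aa_key[OF s order_refl] by (intro bdd_belowI[of _ "aa 1 s - cc s"]) auto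
qed (use n in auto)

lemma Pf_ge: assumes s: "1 / 2 < s" and n: "1 \<le> n" shows "aa n s / n - cc s / n \<le> Pf s"
  unfolding Pf_def by (rule cINF_greatest) (use aa_key[OF s n] in auto)

lemma Pf_ge1: "1 / 2 < s \<Longrightarrow> aa 1 s - cc s \<le> Pf s"
  using Pf_ge[of s 1] by simp

lemma Pf_tendsto: assumes s: "1 / 2 < s" shows "(\<lambda>n. aa n s / real n) \<longlonglongrightarrow> Pf s"
proof (rule tendsto_sandwich[of "\<lambda>n. Pf s" _ _ "\<lambda>n. Pf s + cc s / real n"])
  show "eventually (\<lambda>n. Pf s \<le> aa n s / real n) sequentially"
    using Pf_le[OF s] by (intro eventually_sequentiallyI[of 1]) auto
  show "eventually (\<lambda>n. aa n s / real n \<le> Pf s + cc s / real n) sequentially"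
    using Pf_ge[OF s] by (intro eventually_sequentiallyI[of 1]) (auto simp: algebra_simps)
  have "(\<lambda>n. Pf s + cc s / real n) \<longlonglongrightarrow> Pf s + 0"
    by (intro tendsto_intros tendsto_divide_0[OF tendsto_const] filterlim_real_sequentially)
  then show "(\<lambda>n. Pf s + cc s / real n) \<longlonglongrightarrow> Pf s" by simp
qed simp

lemma pressure_fin:
  assumes s: "1 / 2 < s"
  shows "pressure (\<lambda>y. - s * ln (abs_gauss_deriv y) - C) = ereal (Pf s - C)"
proof -
  have eq: "ereal (1 / real n) * ln_ennreal (partition_sum (\<lambda>y. - s * ln (abs_gauss_deriv y) - C) n)
      = ereal (aa n s / real n - C)" if n: "1 \<le> n" for n
  proof -
    have "partition_sum (\<lambda>y. - s * ln (abs_gauss_deriv y) - C) n = ennreal (exp (- real n * C) * wr n s)"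
      by (subst partition_formula) (use s in \<open>simp_all add: W_eq ennreal_mult wr_pos less_imp_le\<close>)
    moreover have "ln_ennreal (ennreal (exp (- real n * C) * wr n s)) = ereal (- real n * C + aa n s)"
      using wr_pos[OF s, of n] unfolding ln_ennreal_def aa_def by (simp add: ln_mult)
    ultimately show ?thesis using n by (simp add: field_simps)
  qed
  have "(\<lambda>n. ereal (aa n s / real n - C)) \<longlonglongrightarrow> ereal (Pf s - C)"
    by (intro tendsto_intros Pf_tendsto s)
  then have "(\<lambda>n. ereal (1 / real n) * ln_ennreal (partition_sum (\<lambda>y. - s * ln (abs_gauss_deriv y) - C) n))
      \<longlonglongrightarrow> ereal (Pf s - C)"
    by (rule Lim_transform_eventually) (use eq in \<open>auto intro!: eventually_sequentiallyI[of 1]\<close>)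
  then show ?thesis unfolding pressure_def by (rule limI)
qed

lemma pressure_inf:
  assumes s0: "0 \<le> s" and s: "s \<le> 1 / 2"
  shows "pressure (\<lambda>y. - s * ln (abs_gauss_deriv y) - C) = \<infinity>"
proof -
  have eq: "ereal (1 / real n) * ln_ennreal (partition_sum (\<lambda>y. - s * ln (abs_gauss_deriv y) - C) n)
      = \<infinity>" if n: "1 \<le> n" for n
  proof -
    have "partition_sum (\<lambda>y. - s * ln (abs_gauss_deriv y) - C) n = top"
      by (subst partition_formula) (use s0 s n in \<open>simp_all add: W_infinite ennreal_mult_top\<close>)
    then show ?thesis using n by (simp add: ln_ennreal_def)
  qed
  have "(\<lambda>n. ereal (1 / real n) * ln_ennreal (partition_sum (\<lambda>y. - s * ln (abs_gauss_deriv y) - C) n))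
      \<longlonglongrightarrow> \<infinity>"
    by (rule Lim_transform_eventually[OF tendsto_const]) (use eq in \<open>auto intro!: eventually_sequentiallyI[of 1]\<close>)
  then show ?thesis unfolding pressure_def by (rule limI)
qed



lemma aa_decr_n:
  assumes s: "1 / 2 < s" and st: "s < t"
  shows "aa n t \<le> aa n s - 2 * (t - s) * real (n div 2) * ln 2"
proof -
  have t: "1 / 2 < t" using s st by simp
  define K where "K = 2 powr (-2 * (t - s) * real (n div 2))"
  have K: "0 < K" unfolding K_def by simp
  have pt: "real (Qc w) powr (-2 * t) \<le> K * real (Qc w) powr (-2 * s)" if w: "w \<in> words n" for w
  proof -
    have pw: "posl w" "length w = n" using w by (auto simp: words_posl)
    have g: "real (2 ^ (n div 2)) \<le> real (Qc w)" using Qc_growth[OF pw(1)] pw(2) by (simp only: of_nat_le_iff)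
    have "real (Qc w) powr (-2 * (t - s)) \<le> (2 powr real (n div 2)) powr (-2 * (t - s))"
      using g st by (intro powr_mono2') (auto simp: powr_realpow)
    also have "\<dots> = K" unfolding K_def by (simp add: powr_powr mult.commute)
    finally have "real (Qc w) powr (-2 * (t - s)) \<le> K" .
    then have "real (Qc w) powr (-2 * (t - s)) * real (Qc w) powr (-2 * s) \<le> K * real (Qc w) powr (-2 * s)"
      by (intro mult_right_mono) auto
    then show ?thesis by (simp add: powr_add[symmetric] algebra_simps)
  qed
  have "W n t \<le> (\<integral>\<^sup>+w. ennreal K * ennreal (real (Qc w) powr (-2 * s)) \<partial>count_space (words n))"
    unfolding W_def using K pt by (intro nn_integral_mono) (auto simp: ennreal_mult[symmetric])
  also have "\<dots> = ennreal K * W n s" unfolding W_def by (rule nn_integral_cmult) simp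
  also have "ennreal K * W n s = ennreal (K * wr n s)"
    using W_eq[OF s] K wr_pos[OF s, of n] by (simp add: ennreal_mult)
  finally have "ennreal (wr n t) \<le> ennreal (K * wr n s)"
    using W_eq[OF t] by simp
  then have "wr n t \<le> K * wr n s" using K wr_pos[OF s, of n] by (subst (asm) ennreal_le_iff) auto
  then have "ln (wr n t) \<le> ln (K * wr n s)" using K wr_pos[OF s, of n] wr_pos[OF t, of n] by simp
  also have "\<dots> = ln K + ln (wr n s)" using K wr_pos[OF s, of n] by (simp add: ln_mult)
  finally show ?thesis unfolding aa_def K_def by (simp add: ln_powr algebra_simps)
qed

lemma Pf_decr:
  assumes s: "1 / 2 < s" and st: "s < t"
  shows "Pf t \<le> Pf s - (t - s) * ln 2"
proof -
  have t: "1 / 2 < t" using s st by simp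
  have le: "aa n t / real n \<le> aa n s / real n - (t - s) * ln 2 + (t - s) * ln 2 / real n" if n: "1 \<le> n" for n
  proof -
    have "real n - 1 \<le> 2 * real (n div 2)" by linarith
    then have "((t - s) * ln 2) * (real n - 1) \<le> ((t - s) * ln 2) * (2 * real (n div 2))"
      using st by (intro mult_left_mono) auto
    then have "(t - s) * ln 2 * (real n - 1) \<le> 2 * (t - s) * real (n div 2) * ln 2"
      by (simp add: algebra_simps)
    then have "aa n t \<le> aa n s - (t - s) * ln 2 * (real n - 1)"
      using aa_decr_n[OF s st, of n] by linarith
    then have "aa n t / real n \<le> (aa n s - (t - s) * ln 2 * (real n - 1)) / real n"
      using n by (intro divide_right_mono) auto
    also have "\<dots> = aa n s / real n - (t - s) * ln 2 + (t - s) * ln 2 / real n"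
      using n by (simp add: field_simps)
    finally show ?thesis .
  qed
  have "(\<lambda>n. aa n s / real n - (t - s) * ln 2 + (t - s) * ln 2 / real n) \<longlonglongrightarrow> Pf s - (t - s) * ln 2 + 0"
    by (intro tendsto_intros Pf_tendsto s tendsto_divide_0[OF tendsto_const] filterlim_real_sequentially)
  then show ?thesis
    using Pf_tendsto[OF t] le
    by (intro LIMSEQ_le[OF Pf_tendsto[OF t]]) (auto intro: exI[of _ 1])
qed

lemma aa_convex:
  assumes s: "1 / 2 < s" and t: "1 / 2 < t" and th: "0 < \<theta>" "\<theta> < 1"
  shows "aa n ((1 - \<theta>) * s + \<theta> * t) \<le> (1 - \<theta>) * aa n s + \<theta> * aa n t"
proof -
  define r where "r = (1 - \<theta>) * s + \<theta> * t"
  have r: "1 / 2 < r"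
  proof -
    have "(1 - \<theta>) * (1/2) + \<theta> * (1/2) < (1 - \<theta>) * s + \<theta> * t"
      using s t th by (intro add_strict_mono mult_strict_left_mono) auto
    moreover have "(1 - \<theta>) * (1/2) + \<theta> * (1/2) = (1/2::real)" by (simp add: field_simps)
    ultimately show ?thesis unfolding r_def by linarith
  qed
  define U where "U = wr n s"
  define V where "V = wr n t"
  have U: "0 < U" and V: "0 < V" unfolding U_def V_def using wr_pos s t by auto
  define K where "K = U powr (1 - \<theta>) * V powr \<theta>"
  have K: "0 < K" unfolding K_def using U V by simp
  have pt: "real (Qc w) powr (-2 * r) \<le>
      K * ((1 - \<theta>) / U) * real (Qc w) powr (-2 * s) + K * (\<theta> / V) * real (Qc w) powr (-2 * t)"
    if w: "w \<in> words n" for w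
  proof -
    have q: "0 < real (Qc w)" using Qc_pos[of w] w by (auto simp: words_posl)
    define x where "x = real (Qc w) powr (-2 * s) / U"
    define y where "y = real (Qc w) powr (-2 * t) / V"
    have "x powr (1 - \<theta>) * y powr \<theta> \<le> (1 - \<theta>) * x + \<theta> * y"
      using th q U V unfolding x_def y_def by (intro Youngs_inequality_0) auto
    also have "x powr (1 - \<theta>) * y powr \<theta> = real (Qc w) powr (-2 * r) / K"
      unfolding x_def y_def K_def r_def using q U V
      by (simp add: powr_divide powr_powr powr_add[symmetric] algebra_simps)
    finally have "real (Qc w) powr (-2 * r) \<le> K * ((1 - \<theta>) * x + \<theta> * y)"
      using K by (simp add: divide_le_eq mult.commute)
    then show ?thesis unfolding x_def y_def by (simp add: algebra_simps)
  qed
  have "W n r \<le> (\<integral>\<^sup>+w. ennreal (K * ((1 - \<theta>) / U)) * ennreal (real (Qc w) powr (-2 * s))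
       + ennreal (K * (\<theta> / V)) * ennreal (real (Qc w) powr (-2 * t)) \<partial>count_space (words n))"
    unfolding W_def
  proof (intro nn_integral_mono)
    fix w assume "w \<in> space (count_space (words n))"
    then have w: "w \<in> words n" by simp
    have "ennreal (real (Qc w) powr (-2 * r)) \<le>
       ennreal (K * ((1 - \<theta>) / U) * real (Qc w) powr (-2 * s) + K * (\<theta> / V) * real (Qc w) powr (-2 * t))"
      using pt[OF w] by (intro ennreal_leI)
    also have "\<dots> = ennreal (K * ((1 - \<theta>) / U)) * ennreal (real (Qc w) powr (-2 * s))
       + ennreal (K * (\<theta> / V)) * ennreal (real (Qc w) powr (-2 * t))"
      using K U V th by (simp add: ennreal_plus[symmetric] ennreal_mult[symmetric] del: ennreal_plus)
    finally show "ennreal (real (Qc w) powr (-2 * r)) \<le> ennreal (K * ((1 - \<theta>) / U)) * ennreal (real (Qc w) powr (-2 * s))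
       + ennreal (K * (\<theta> / V)) * ennreal (real (Qc w) powr (-2 * t))" .
  qed
  also have "\<dots> = ennreal (K * ((1 - \<theta>) / U)) * W n s + ennreal (K * (\<theta> / V)) * W n t"
    unfolding W_def by (simp add: nn_integral_add nn_integral_cmult)
  also have "\<dots> = ennreal (K * ((1 - \<theta>) / U) * U + K * (\<theta> / V) * V)"
    using W_eq[OF s] W_eq[OF t] K U V th unfolding U_def V_def
    by (simp add: ennreal_plus[symmetric] ennreal_mult[symmetric] del: ennreal_plus)
  also have "K * ((1 - \<theta>) / U) * U + K * (\<theta> / V) * V = K"
    using U V by (simp add: field_simps)
  finally have "ennreal (wr n r) \<le> ennreal K" using W_eq[OF r] by simp
  then have "wr n r \<le> K" using K by (subst (asm) ennreal_le_iff) auto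
  then have "ln (wr n r) \<le> ln K" using K wr_pos[OF r, of n] by simp
  also have "ln K = (1 - \<theta>) * ln U + \<theta> * ln V"
    unfolding K_def using U V by (simp add: ln_mult ln_powr)
  finally show ?thesis unfolding aa_def r_def U_def V_def .
qed

lemma Pf_convex_ineq:
  assumes s: "1 / 2 < s" and t: "1 / 2 < t" and th: "0 < \<theta>" "\<theta> < 1"
  shows "Pf ((1 - \<theta>) * s + \<theta> * t) \<le> (1 - \<theta>) * Pf s + \<theta> * Pf t"
proof -
  define r where "r = (1 - \<theta>) * s + \<theta> * t"
  have r: "1 / 2 < r"
  proof -
    have "(1 - \<theta>) * (1/2) + \<theta> * (1/2) < (1 - \<theta>) * s + \<theta> * t"
      using s t th by (intro add_strict_mono mult_strict_left_mono) auto
    moreover have "(1 - \<theta>) * (1/2) + \<theta> * (1/2) = (1/2::real)" by (simp add: field_simps)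
    ultimately show ?thesis unfolding r_def by linarith
  qed
  have "(\<lambda>n. (1 - \<theta>) * (aa n s / real n) + \<theta> * (aa n t / real n)) \<longlonglongrightarrow> (1 - \<theta>) * Pf s + \<theta> * Pf t"
    by (intro tendsto_intros Pf_tendsto s t)
  moreover have "aa n r / real n \<le> (1 - \<theta>) * (aa n s / real n) + \<theta> * (aa n t / real n)" for n
  proof -
    have "aa n r / real n \<le> ((1 - \<theta>) * aa n s + \<theta> * aa n t) / real n"
      using aa_convex[OF s t th, of n] unfolding r_def by (intro divide_right_mono) auto
    then show ?thesis by (simp add: add_divide_distrib)
  qed
  ultimately show ?thesis unfolding r_def[symmetric]
    by (intro LIMSEQ_le[OF Pf_tendsto[OF r]]) auto
qed

lemma Pf_convex: "convex_on {1/2<..} Pf"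
proof (rule convex_onI)
  fix t x y :: real assume "0 < t" "t < 1" "x \<in> {1/2<..}" "y \<in> {1/2<..}"
  then show "Pf ((1 - t) *\<^sub>R x + t *\<^sub>R y) \<le> (1 - t) * Pf x + t * Pf y"
    using Pf_convex_ineq[of x y t] by simp
qed (rule convex_real_interval)

lemma Pf_cont: "continuous_on {1/2<..} Pf"
  by (rule convex_on_continuous[OF open_greaterThan Pf_convex])



definition ff :: "nat list \<Rightarrow> real" where
  "ff w = 1 / (real (Qc w) * (real (Qc w) + real (Pc w)))"

lemma ff_tele:
  assumes v: "posl v"
  shows "(\<lambda>i. ff (Suc i # v)) sums ff v"
proof -
  define q where "q = real (Qc v)"
  define p where "p = real (Pc v)"
  have q: "1 \<le> q" unfolding q_def using Qc_pos[OF v] by simp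
  have p: "0 \<le> p" unfolding p_def by simp
  define x where "x i = 1 / (real (Suc i) * q + p)" for i
  have x0: "x \<longlonglongrightarrow> 0"
  proof (rule tendsto_sandwich[of "\<lambda>_. 0" _ _ "\<lambda>i. inverse (real (Suc i))"])
    show "eventually (\<lambda>i. 0 \<le> x i) sequentially" using q p unfolding x_def by auto
    show "eventually (\<lambda>i. x i \<le> inverse (real (Suc i))) sequentially"
    proof (intro always_eventually allI)
      fix i
      have "real (Suc i) \<le> real (Suc i) * q + p" using q p by (simp add: mult_le_cancel_left1 add_increasing2)
      then show "x i \<le> inverse (real (Suc i))" unfolding x_def
        by (simp add: inverse_eq_divide frac_le)
    qed
    show "(\<lambda>i. inverse (real (Suc i))) \<longlonglongrightarrow> 0" by (rule LIMSEQ_inverse_real_of_nat)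
  qed simp
  have "(\<lambda>i. x i - x (Suc i)) sums (x 0 - 0)" by (rule telescope_sums'[OF x0])
  then have "(\<lambda>i. (1 / q) * (x i - x (Suc i))) sums ((1 / q) * (x 0 - 0))" by (rule sums_mult)
  moreover have "(1 / q) * (x i - x (Suc i)) = ff (Suc i # v)" for i
  proof -
    define A where "A = real (Suc i) * q + p"
    have A: "0 < A" unfolding A_def using q p by (simp add: add_pos_nonneg)
    have xs: "x (Suc i) = 1 / (A + q)" unfolding x_def A_def by (simp add: algebra_simps)
    have xi: "x i = 1 / A" unfolding x_def A_def by simp
    have "ff (Suc i # v) = 1 / (A * (A + q))" unfolding ff_def A_def q_def p_def by (simp add: algebra_simps)
    moreover have "(1 / q) * (x i - x (Suc i)) = 1 / (A * (A + q))"
      unfolding xs xi using A q by (simp add: field_simps)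
    ultimately show ?thesis by simp
  qed
  moreover have "(1 / q) * (x 0 - 0) = ff v"
    unfolding ff_def x_def q_def p_def using q by (simp add: field_simps q_def)
  ultimately show ?thesis by simp
qed

lemma ff_nonneg: "0 \<le> ff w"
  by (simp add: ff_def)

lemma ff_sum: "(\<integral>\<^sup>+w. ennreal (ff w) \<partial>count_space (words n)) = 1"
proof (induction n)
  case 0 then show ?case by (simp add: words_0 nn_integral_count_space_finite ff_def)
next
  case (Suc n)
  have "(\<integral>\<^sup>+w. ennreal (ff w) \<partial>count_space (words (Suc n))) =
        (\<integral>\<^sup>+w. ennreal (ff w) \<partial>count_space (words (1 + n)))" by simp
  also have "\<dots> = (\<integral>\<^sup>+v. \<integral>\<^sup>+u. ennreal (ff (u @ v)) \<partial>count_space (words 1) \<partial>count_space (words n))"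
    by (rule split_words')
  also have "\<dots> = (\<integral>\<^sup>+v. ennreal (ff v) \<partial>count_space (words n))"
  proof (intro nn_integral_cong)
    fix v assume "v \<in> space (count_space (words n))"
    then have v: "posl v" by (simp add: words_posl)
    have "(\<integral>\<^sup>+u. ennreal (ff (u @ v)) \<partial>count_space (words 1)) =
          (\<integral>\<^sup>+i. ennreal (ff ([Suc i] @ v)) \<partial>count_space UNIV)"
      by (rule nn_integral_bij_count_space[OF bij_words_1, symmetric])
    also have "\<dots> = (\<Sum>i. ennreal (ff (Suc i # v)))"
      by (simp add: nn_integral_count_space_nat)
    also have "\<dots> = ennreal (\<Sum>i. ff (Suc i # v))"
      using ff_tele[OF v] by (intro suminf_ennreal2) (auto simp: ff_nonneg sums_iff)
    also have "\<dots> = ennreal (ff v)" using ff_tele[OF v] by (simp add: sums_iff)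
    finally show "(\<integral>\<^sup>+u. ennreal (ff (u @ v)) \<partial>count_space (words 1)) = ennreal (ff v)" .
  qed
  also have "\<dots> = 1" by (rule Suc.IH)
  finally show ?case .
qed

lemma Q2_ff:
  assumes w: "posl w"
  shows "ff w \<le> real (Qc w) powr (-2 * 1) \<and> real (Qc w) powr (-2 * 1) \<le> 2 * ff w"
proof -
  define q where "q = real (Qc w)"
  define p where "p = real (Pc w)"
  have q: "1 \<le> q" unfolding q_def using Qc_pos[OF w] by simp
  have p: "0 \<le> p" "p \<le> q" unfolding p_def q_def using Pc_le_Qc[OF w] by auto
  have e: "real (Qc w) powr (-2 * 1) = 1 / (q * q)"
    unfolding q_def using q by (simp add: powr_minus powr_numeral power2_eq_square q_def divide_inverse)
  have f: "ff w = 1 / (q * (q + p))" unfolding ff_def q_def p_def by simp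
  have "q * q \<le> q * (q + p)" using q p by (simp add: mult_left_mono)
  moreover have "q * (q + p) \<le> 2 * (q * q)" using q p by (simp add: algebra_simps mult_left_mono)
  moreover have qq: "0 < q * q" using q by simp
  ultimately have "1 / (q * (q + p)) \<le> 1 / (q * q)" and "2 / (2 * (q * q)) \<le> 2 / (q * (q + p))"
    by (intro divide_left_mono; use q p in \<open>auto intro!: mult_pos_pos add_pos_nonneg\<close>)+
  moreover have "2 / (2 * (q * q)) = 1 / (q * q)" by simp
  ultimately show ?thesis unfolding e f by simp
qed

lemma wr1_bounds: "1 \<le> wr n 1 \<and> wr n 1 \<le> 2"
proof -
  have "1 = (\<integral>\<^sup>+w. ennreal (ff w) \<partial>count_space (words n))" by (rule ff_sum[symmetric])
  also have "\<dots> \<le> W n 1" unfolding W_def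
    by (intro nn_integral_mono ennreal_leI) (use Q2_ff in \<open>auto simp: words_posl\<close>)
  finally have lo: "1 \<le> W n 1" .
  have "W n 1 \<le> (\<integral>\<^sup>+w. ennreal 2 * ennreal (ff w) \<partial>count_space (words n))" unfolding W_def
  proof (intro nn_integral_mono)
    fix w assume "w \<in> space (count_space (words n))"
    then have "posl w" by (simp add: words_posl)
    then have "ennreal (real (Qc w) powr (-2 * 1)) \<le> ennreal (2 * ff w)"
      using Q2_ff by (intro ennreal_leI) auto
    also have "\<dots> = ennreal 2 * ennreal (ff w)" by (simp add: ennreal_mult ff_nonneg)
    finally show "ennreal (real (Qc w) powr (-2 * 1)) \<le> ennreal 2 * ennreal (ff w)" .
  qed
  also have "\<dots> = 2" by (simp add: nn_integral_cmult ff_sum)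
  finally have hi: "W n 1 \<le> 2" .
  have "ennreal 1 \<le> ennreal (wr n 1)" "ennreal (wr n 1) \<le> ennreal 2" using lo hi W_eq[of 1 n] by simp_all
  moreover have "0 \<le> wr n 1" by (simp add: wr_def)
  ultimately show ?thesis by (subst (asm) (1 2) ennreal_le_iff) auto
qed

lemma Pf_1: "Pf 1 = 0"
proof -
  have "(\<lambda>n. aa n 1 / real n) \<longlonglongrightarrow> 0"
  proof (rule tendsto_sandwich[of "\<lambda>_. 0" _ _ "\<lambda>n. ln 2 / real n"])
    show "eventually (\<lambda>n. 0 \<le> aa n 1 / real n) sequentially"
      using wr1_bounds by (auto simp: aa_def)
    show "eventually (\<lambda>n. aa n 1 / real n \<le> ln 2 / real n) sequentially"
    proof (intro always_eventually allI)
      fix n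
      have "ln (wr n 1) \<le> ln 2" using wr1_bounds[of n] by (subst ln_le_cancel_iff) auto
      then show "aa n 1 / real n \<le> ln 2 / real n" unfolding aa_def by (rule divide_right_mono) simp
    qed
    show "(\<lambda>n. ln 2 / real n) \<longlonglongrightarrow> 0"
      by (intro tendsto_divide_0[OF tendsto_const] filterlim_at_top_imp_at_infinity[OF filterlim_real_sequentially])
  qed simp
  then show ?thesis using Pf_tendsto[of 1] LIMSEQ_unique by auto
qed

lemma sum_inv_harm: "(\<Sum>i<N. inverse (real (Suc i))) = harm N"
  by (induction N) (simp_all add: harm_Suc harm_def)

lemma Pf_big: "\<exists>s. 1 / 2 < s \<and> s < 1 \<and> M < Pf s"
proof -
  define T where "T = exp (M + 2 * ln 2)"
  have T: "0 < T" unfolding T_def by simp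
  define N where "N = nat \<lceil>exp T\<rceil>"
  have "exp T \<le> real N" unfolding N_def by linarith
  then have "ln (exp T) < ln (real N + 1)" by (subst ln_less_cancel_iff) auto
  then have "T < ln (real N + 1)" by simp
  also have "\<dots> \<le> harm N" by (rule ln_le_harm)
  finally have hT: "T < harm N" .
  define G where "G s = (\<Sum>i<N. real (Suc i) powr (-2 * s))" for s
  have G12: "G (1/2) = harm N"
    unfolding G_def sum_inv_harm[symmetric] by (intro sum.cong refl) (simp add: powr_minus)
  have "(G \<longlongrightarrow> G (1/2)) (at_right (1/2))"
    unfolding G_def by (intro tendsto_intros) auto
  then have "eventually (\<lambda>s. T < G s) (at_right (1/2))"
    using hT G12 by (intro order_tendstoD(1)) auto
  then obtain b where b: "b > 1/2" "\<And>y. y > 1/2 \<Longrightarrow> y < b \<Longrightarrow> T < G y"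
    unfolding eventually_at_right_field by auto
  define s where "s = (1/2 + min b 1) / 2"
  have s: "1/2 < s" "s < 1" "s < b" using b unfolding s_def by auto
  have GT: "T < G s" using b s by auto
  have sm: "summable (\<lambda>i. real (Suc i) powr (-2 * s))" using s by (intro summable_powr_Suc) auto
  have "wr 1 s = (\<Sum>i. real (Suc i) powr (-2 * s))"
  proof -
    have "0 \<le> (\<Sum>i. real (Suc i) powr (-2 * s))" using sm by (intro suminf_nonneg) auto
    then show ?thesis unfolding wr_def W_1 using sm by (subst suminf_ennreal2) auto
  qed
  also have "G s \<le> \<dots>" unfolding G_def by (rule sum_le_suminf[OF sm]) auto
  finally have "G s \<le> wr 1 s" .
  then have "ln T < aa 1 s" unfolding aa_def using GT T by (simp add: less_le_trans)
  then have "M + 2 * ln 2 < aa 1 s" unfolding T_def by simp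
  moreover have "cc s < 2 * ln 2" unfolding cc_def using s by simp
  moreover have "aa 1 s - cc s \<le> Pf s" using Pf_ge1 s by simp
  ultimately show ?thesis using s by (intro exI[of _ s]) auto
qed



fun hh :: "nat \<Rightarrow> real \<Rightarrow> real" where
  "hh 0 s = 1 / s"
| "hh (Suc 0) s = 1 / s"
| "hh (Suc (Suc n)) s = ((1 - s) * hh (Suc n) s + real (Suc (Suc n))) / s"

lemma hh_pos: "0 < s \<Longrightarrow> s \<le> 1 \<Longrightarrow> 0 < hh n s"
proof (induction n s rule: hh.induct)
  case (3 n s)
  then have "0 < (1 - s) * hh (Suc n) s + real (Suc (Suc n))"
    by (intro add_nonneg_pos mult_nonneg_nonneg) auto
  then show ?case using 3 by simp
qed simp_all

lemma g_hh: "0 < s \<Longrightarrow> s \<le> 1 \<Longrightarrow> g n s = 1 / hh n s"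
proof (induction n s rule: hh.induct)
  case (3 n s)
  define h where "h = hh (Suc n) s"
  have h: "0 < h" unfolding h_def using hh_pos 3 by auto
  have num: "0 < (1 - s) * h + real (Suc (Suc n))"
    using h 3 by (intro add_nonneg_pos mult_nonneg_nonneg) auto
  have "g (Suc (Suc n)) s = s * (1 / h) / (1 - s + real (Suc (Suc n)) * (1 / h))"
    using 3 by (simp add: h_def)
  also have "\<dots> = s / ((1 - s) * h + real (Suc (Suc n)))"
    using h num by (simp add: field_simps)
  also have "\<dots> = 1 / hh (Suc (Suc n)) s"
    using 3 num by (simp add: h_def)
  finally show ?case .
qed simp_all

lemma hh_anti: "0 < s \<Longrightarrow> s \<le> t \<Longrightarrow> t \<le> 1 \<Longrightarrow> hh n t \<le> hh n s"
proof (induction n s rule: hh.induct)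
  case (1 s) then show ?case by (simp add: frac_le)
next
  case (2 s) then show ?case by (simp add: frac_le)
next
  case (3 n s)
  have ht: "0 < hh (Suc n) t" using hh_pos 3 by auto
  have ih: "hh (Suc n) t \<le> hh (Suc n) s" using 3 by simp
  have "(1 - t) * hh (Suc n) t \<le> (1 - s) * hh (Suc n) s"
    using 3 ht ih by (intro mult_mono) auto
  then have "(1 - t) * hh (Suc n) t + real (Suc (Suc n)) \<le> (1 - s) * hh (Suc n) s + real (Suc (Suc n))"
    by simp
  moreover have "0 \<le> (1 - t) * hh (Suc n) t + real (Suc (Suc n))"
    using 3 ht by (intro add_nonneg_nonneg mult_nonneg_nonneg) auto
  ultimately have "((1 - t) * hh (Suc n) t + real (Suc (Suc n))) / t \<le> ((1 - s) * hh (Suc n) s + real (Suc (Suc n))) / s"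
    using 3 by (intro frac_le) auto
  then show ?case by simp
qed

lemma hh_cont: "continuous_on {0<..1} (hh n)"
proof (induction n rule: nat_less_induct)
  case (1 n)
  show ?case
  proof (cases n)
    case 0 then show ?thesis by (auto intro!: continuous_intros)
  next
    case (Suc m)
    show ?thesis
    proof (cases m)
      case 0 then show ?thesis using Suc by (auto intro!: continuous_intros)
    next
      case (Suc k)
      have c: "continuous_on {0<..1} (hh (Suc k))" using 1 \<open>n = Suc m\<close> Suc by auto
      have "continuous_on {0<..1} (\<lambda>s. ((1 - s) * hh (Suc k) s + real (Suc (Suc k))) / s)"
        by (intro continuous_intros c) auto
      then show ?thesis using \<open>n = Suc m\<close> Suc by simp
    qed
  qed
qed

lemma hh_1: "1 \<le> n \<Longrightarrow> hh n 1 = real n"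
proof (induction n rule: nat_less_induct)
  case (1 n)
  show ?case
  proof (cases n)
    case 0 then show ?thesis using 1 by simp
  next
    case (Suc m)
    then show ?thesis by (cases m) auto
  qed
qed

lemma g_pos: "0 < s \<Longrightarrow> s \<le> 1 \<Longrightarrow> 0 < g n s"
  using g_hh hh_pos by simp

lemma g_mono: "0 < s \<Longrightarrow> s \<le> t \<Longrightarrow> t \<le> 1 \<Longrightarrow> g n s \<le> g n t"
  using g_hh[of s n] g_hh[of t n] hh_anti[of s t n] hh_pos[of s n] hh_pos[of t n]
  by (simp add: frac_le)

lemma g_1: "1 \<le> n \<Longrightarrow> g n 1 = 1 / real n"
  using g_hh[of 1 n] hh_1 by simp

lemma g_cont: "continuous_on {0<..1} (g n)"
proof -
  have "continuous_on {0<..1} (\<lambda>s. 1 / hh n s)"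
    using hh_pos by (intro continuous_intros hh_cont) (auto simp: less_imp_neq[symmetric])
  then show ?thesis by (rule continuous_on_cong[THEN iffD1, rotated 2]) (auto simp: g_hh)
qed



definition Fb :: "nat \<Rightarrow> real \<Rightarrow> real \<Rightarrow> real" where
  "Fb d B s = Pf s - g d s * ln B"

lemma F_strict:
  assumes B: "1 < B" and xy: "1 / 2 < x" "x < y" "y \<le> 1"
  shows "Fb d B y < Fb d B x"
proof -
  have "Pf y \<le> Pf x - (y - x) * ln 2" using Pf_decr xy by auto
  then have "Pf y < Pf x" using xy by (smt (verit) ln_gt_zero mult_pos_pos)
  moreover have "g d x * ln B \<le> g d y * ln B" using g_mono[of x y d] xy B by (intro mult_right_mono) auto
  ultimately show ?thesis unfolding Fb_def by simp
qed

lemma F_cont: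
  assumes a: "1 / 2 < a"
  shows "continuous_on {a..1} (Fb d B)"
proof -
  have "continuous_on {a..1} Pf" using Pf_cont by (rule continuous_on_subset) (use a in auto)
  moreover have "continuous_on {a..1} (g d)" using g_cont by (rule continuous_on_subset) (use a in auto)
  ultimately show ?thesis unfolding Fb_def by (intro continuous_intros)
qed

lemma lam_char:
  assumes d: "1 \<le> d" and B: "1 < B"
  shows "\<exists>r. 1 / 2 < r \<and> r < 1 \<and> Fb d B r = 0 \<and> lambda_d d B = r"
proof -
  have lB: "0 < ln B" using B by simp
  obtain s0 where s0: "1 / 2 < s0" "s0 < 1" "ln B < Pf s0" using Pf_big by blast
  have "g d s0 \<le> g d 1" using s0 by (intro g_mono) auto
  also have "\<dots> \<le> 1" using d g_1[OF d] by simp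
  finally have "g d s0 * ln B \<le> ln B" using lB by (simp add: mult_le_cancel_right1)
  then have F0: "0 \<le> Fb d B s0" using s0 unfolding Fb_def by simp
  have F1: "Fb d B 1 < 0" unfolding Fb_def using Pf_1 g_1[OF d] d lB by simp
  obtain r where r: "s0 \<le> r" "r \<le> 1" "Fb d B r = 0"
    using IVT2'[of "Fb d B" 1 0 s0] F0 F1 F_cont[OF s0(1)] s0 by auto
  have r1: "r < 1" using r F1 by (cases "r = 1") auto
  have rh: "1 / 2 < r" using r s0 by simp
  define S where "S = {s. 0 \<le> s \<and> pressure (\<lambda>x. - s * ln (abs_gauss_deriv x) - g d s * ln B) \<le> 0}"
  have memS: "s \<in> S \<longleftrightarrow> 1 / 2 < s \<and> Fb d B s \<le> 0" for s
  proof (cases "1 / 2 < s")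
    case True
    then show ?thesis unfolding S_def using pressure_fin[OF True, of "g d s * ln B"]
      by (simp add: Fb_def)
  next
    case False
    then show ?thesis unfolding S_def using pressure_inf[of s "g d s * ln B"] by auto
  qed
  have "Inf S = r"
  proof (rule cInf_eq_minimum)
    show "r \<in> S" using memS rh r by simp
  next
    fix y assume "y \<in> S"
    then have y: "1 / 2 < y" "Fb d B y \<le> 0" using memS by auto
    show "r \<le> y"
    proof (rule ccontr)
      assume "\<not> r \<le> y"
      then have "Fb d B r < Fb d B y" using F_strict[where d=d, OF B y(1), of r] r by simp
      then show False using y r by simp
    qed
  qed
  then have "lambda_d d B = r" unfolding lambda_d_def S_def by simp
  then show ?thesis using rh r1 r by blast
qed

lemma lam_gt:
  assumes d: "1 \<le> d" and B: "1 < B" and s: "1 / 2 < s" "s \<le> 1" and F: "0 < Fb d B s"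
  shows "s < lambda_d d B"
proof -
  obtain r where r: "1 / 2 < r" "r < 1" "Fb d B r = 0" "lambda_d d B = r" using lam_char[OF d B] by blast
  show ?thesis
  proof (rule ccontr)
    assume "\<not> s < lambda_d d B"
    then have "r \<le> s" using r by simp
    then have "Fb d B s \<le> Fb d B r" using F_strict[where d=d, OF B r(1), of s] s by (cases "r = s") auto
    then show False using F r by simp
  qed
qed

lemma lam_lt:
  assumes d: "1 \<le> d" and B: "1 < B" and s: "1 / 2 < s" "s \<le> 1" and F: "Fb d B s < 0"
  shows "lambda_d d B < s"
proof -
  obtain r where r: "1 / 2 < r" "r < 1" "Fb d B r = 0" "lambda_d d B = r" using lam_char[OF d B] by blast
  show ?thesis
  proof (rule ccontr)
    assume "\<not> lambda_d d B < s"
    then have "s \<le> r" using r by simp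
    then have "Fb d B r \<le> Fb d B s" using F_strict[where d=d, OF B s(1), of r] r by (cases "r = s") auto
    then show False using F r by simp
  qed
qed

lemma lam_bounds:
  assumes d: "1 \<le> d" and B: "1 < B"
  shows "1 / 2 < lambda_d d B \<and> lambda_d d B < 1 \<and> Fb d B (lambda_d d B) = 0"
  using lam_char[OF d B] by auto

lemma Pf_pos: "1 / 2 < s \<Longrightarrow> s < 1 \<Longrightarrow> 0 < Pf s"
  using Pf_decr[of s 1] Pf_1 by (smt (verit) ln_gt_zero mult_pos_pos)

theorem proposition2p16:
  fixes d :: nat
  assumes "1 \<le> d"
  shows "continuous_on {1<..} (lambda_d d)
    \<and> (\<forall>B1 B2. 1 < B1 \<and> B1 < B2 \<longrightarrow> lambda_d d B2 < lambda_d d B1)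
    \<and> (lambda_d d \<longlongrightarrow> 1) (at_right 1)
    \<and> (lambda_d d \<longlongrightarrow> 1 / 2) at_top
    \<and> (\<forall>B>1. 1 / 2 \<le> lambda_d d B)"
proof (intro conjI)
  show "\<forall>B>1. 1 / 2 \<le> lambda_d d B" using lam_bounds[OF assms] by (auto intro: less_imp_le)
next
  show "\<forall>B1 B2. 1 < B1 \<and> B1 < B2 \<longrightarrow> lambda_d d B2 < lambda_d d B1"
  proof (intro allI impI)
  fix B1 B2 :: real assume h: "1 < B1 \<and> B1 < B2"
  define r where "r = lambda_d d B1"
  have r: "1 / 2 < r" "r < 1" "Fb d B1 r = 0" using lam_bounds[OF assms, of B1] h unfolding r_def by auto
  have gp: "0 < g d r" using g_pos r by simp
  have "ln B1 < ln B2" using h by simp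
  then have "g d r * ln B1 < g d r * ln B2" using gp by simp
  then have "Fb d B2 r < 0" using r unfolding Fb_def by simp
  then show "lambda_d d B2 < lambda_d d B1" using lam_lt[OF assms, of B2 r] h r unfolding r_def by simp
  qed
next
  show "(lambda_d d \<longlongrightarrow> 1) (at_right 1)"
  proof (rule order_tendstoI)
    fix a :: real assume a: "a < 1"
    define s where "s = max a (3/4)"
    have s: "1 / 2 < s" "s < 1" "a \<le> s" using a unfolding s_def by auto
    have P: "0 < Pf s" using Pf_pos s by simp
    have gp: "0 < g d s" using g_pos s by simp
    define b where "b = exp (Pf s / g d s)"
    have b: "1 < b" unfolding b_def using P gp by simp
    show "eventually (\<lambda>B. a < lambda_d d B) (at_right 1)"
      unfolding eventually_at_right_field
    proof (intro exI[of _ b] conjI allI impI)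
      fix B :: real assume B: "1 < B" "B < b"
      then have "ln B < ln b" using b by (subst ln_less_cancel_iff) auto
      then have "ln B < Pf s / g d s" unfolding b_def by simp
      then have "g d s * ln B < Pf s" using gp by (simp add: field_simps)
      then have "0 < Fb d B s" unfolding Fb_def by simp
      then show "a < lambda_d d B" using lam_gt[OF assms B(1) s(1)] s by simp
    qed (rule b)
  next
    fix a :: real assume a: "1 < a"
    show "eventually (\<lambda>B. lambda_d d B < a) (at_right 1)"
      unfolding eventually_at_right_field
      using lam_bounds[OF assms] a by (intro exI[of _ 2]) force
  qed
next
  show "(lambda_d d \<longlongrightarrow> 1 / 2) at_top"
  proof (rule order_tendstoI)
    fix a :: real assume a: "a < 1 / 2"
    show "eventually (\<lambda>B. a < lambda_d d B) at_top"
      using eventually_gt_at_top[of 1] by eventually_elim (use lam_bounds[OF assms] a in force)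
  next
    fix a :: real assume a: "1 / 2 < a"
    define s where "s = min ((a + 1/2) / 2) (3/4)"
    have s: "1 / 2 < s" "s < 1" "s < a" using a unfolding s_def by (auto simp: min_def)
    have gp: "0 < g d s" using g_pos s by simp
    define b where "b = max 1 (exp (Pf s / g d s))"
    show "eventually (\<lambda>B. lambda_d d B < a) at_top"
      using eventually_gt_at_top[of b]
    proof eventually_elim
      fix B assume "b < B"
      then have B: "1 < B" "exp (Pf s / g d s) < B" unfolding b_def by auto
      then have "ln (exp (Pf s / g d s)) < ln B" by (subst ln_less_cancel_iff) auto
      then have "Pf s / g d s < ln B" by simp
      then have "Pf s < g d s * ln B" using gp by (simp add: field_simps)
      then have "Fb d B s < 0" unfolding Fb_def by simp
      then show "lambda_d d B < a" using lam_lt[OF assms B(1) s(1)] s by simp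
    qed
  qed
next
  show "continuous_on {1<..} (lambda_d d)"
    unfolding continuous_on_eq_continuous_at[OF open_greaterThan]
  proof
    fix B0 :: real assume "B0 \<in> {1<..}"
    then have B0: "1 < B0" by simp
    define r where "r = lambda_d d B0"
    have r: "1 / 2 < r" "r < 1" "Fb d B0 r = 0" using lam_bounds[OF assms B0] unfolding r_def by auto
    have Ft: "((\<lambda>B. Fb d B s) \<longlongrightarrow> Fb d B0 s) (at B0)" for s
      unfolding Fb_def using B0 by (intro tendsto_intros) auto
    have ev1: "eventually (\<lambda>B. 1 < B) (at B0)"
      using B0 by (intro order_tendstoD(1)[OF tendsto_ident_at]) 
    show "isCont (lambda_d d) B0"
      unfolding continuous_at r_def[symmetric]
    proof (rule order_tendstoI)
      fix a assume a: "a < r"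
      define s where "s = max a ((r + 1/2) / 2)"
      have s: "1 / 2 < s" "s < r" "a \<le> s" using a r unfolding s_def by (auto simp: max_def)
      have "0 < Fb d B0 s" using F_strict[where d=d, OF B0 s(1) s(2)] r by simp
      then have "eventually (\<lambda>B. 0 < Fb d B s) (at B0)" by (rule order_tendstoD(1)[OF Ft])
      with ev1 show "eventually (\<lambda>B. a < lambda_d d B) (at B0)"
      proof eventually_elim
        case (elim B)
        then show ?case using lam_gt[OF assms elim(1) s(1)] s r by simp
      qed
    next
      fix a assume a: "r < a"
      define s where "s = min ((r + a) / 2) 1"
      have s: "r < s" "s \<le> 1" "s < a" using a r unfolding s_def by (auto simp: min_def)
      have "Fb d B0 s < 0" using F_strict[where d=d, OF B0 r(1) s(1,2)] r by simp
      then have "eventually (\<lambda>B. Fb d B s < 0) (at B0)" by (rule order_tendstoD(2)[OF Ft])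
      with ev1 show "eventually (\<lambda>B. lambda_d d B < a) (at B0)"
      proof eventually_elim
        case (elim B)
        then show ?case using lam_lt[OF assms elim(1), of s] s r by simp
      qed
    qed
  qed
qed

end
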